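(* The class $\mathcal{P}$ of positive MV-algebras is not closed under homomorphic images, hence is not a variety. Specifically, let $\mathbf{C}$ be the Chang MV-algebra with least positive infinitesimal $\epsilon$, and let $\mathbf{C}'$ be the subset $\{0,\epsilon,2\epsilon,\dots\}\cup\{1\}$, which is closed under $\oplus,\odot,\vee,\wedge,0,1$; the equivalence relation $\theta$ on $\mathbf{C}'$ with classes $\{0\}$, $\{n\epsilon\mid n\ge 1\}$, $\{1\}$ is a congruence of $\mathbf{C}'$, and $\mathbf{C}'/\theta$ is not a positive MV-algebra.
   Context: A \emph{positive MV-algebra} is an algebra of type $\{\oplus,\odot,\vee,\wedge,0,1\}$ isomorphic to a subalgebra of the $\{\oplus,\odot,\vee,\wedge,0,1\}$-reduct of some MV-algebra, where MV-algebras are taken with the derived operations $1=\neg 0$, $x\odot y=\neg(\neg x\oplus\neg y)$, $x\vee y=(x\odot\neg y)\oplus y$, $x\wedge y=\neg(\neg x\vee\neg y)$. The Chang algebra $\mathbf{C}$ has universe $\{n\epsilon\mid n\in\mathbb{N}\}\cup\{1-n\epsilon\mid n\in\mathbb{N}\}$, realized as $\Gamma(\mathbb{Z}\times_{\mathrm{lex}}\mathbb{Z},(1,0))$ with $\epsilon=(0,1)$. *)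

theory Defs
  imports Main
begin

definition mv_algebra :: "'a set \<Rightarrow> ('a \<Rightarrow> 'a \<Rightarrow> 'a) \<Rightarrow> ('a \<Rightarrow> 'a) \<Rightarrow> 'a \<Rightarrow> bool" where
  "mv_algebra A oplus neg z \<longleftrightarrow>
     z \<in> A \<and> (\<forall>x\<in>A. neg x \<in> A) \<and> (\<forall>x\<in>A. \<forall>y\<in>A. oplus x y \<in> A) \<and>
     (\<forall>x\<in>A. \<forall>y\<in>A. \<forall>w\<in>A. oplus (oplus x y) w = oplus x (oplus y w)) \<and>
     (\<forall>x\<in>A. \<forall>y\<in>A. oplus x y = oplus y x) \<and>
     (\<forall>x\<in>A. oplus x z = x) \<and>
     (\<forall>x\<in>A. neg (neg x) = x) \<and>
     (\<forall>x\<in>A. oplus x (neg z) = neg z) \<and>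
     (\<forall>x\<in>A. \<forall>y\<in>A. oplus (neg (oplus (neg x) y)) y = oplus (neg (oplus (neg y) x)) x)"

record 'a palg =
  pcarrier :: "'a set"
  pplus :: "'a \<Rightarrow> 'a \<Rightarrow> 'a"
  ptimes :: "'a \<Rightarrow> 'a \<Rightarrow> 'a"
  pjoin :: "'a \<Rightarrow> 'a \<Rightarrow> 'a"
  pmeet :: "'a \<Rightarrow> 'a \<Rightarrow> 'a"
  pzero :: 'a
  pone :: 'a

definition mv_reduct :: "'a set \<Rightarrow> ('a \<Rightarrow> 'a \<Rightarrow> 'a) \<Rightarrow> ('a \<Rightarrow> 'a) \<Rightarrow> 'a \<Rightarrow> 'a palg" where
  "mv_reduct A oplus neg z =
     (let odot = (\<lambda>x y. neg (oplus (neg x) (neg y)));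
          join = (\<lambda>x y. oplus (odot x (neg y)) y)
      in \<lparr> pcarrier = A, pplus = oplus, ptimes = odot, pjoin = join,
           pmeet = (\<lambda>x y. neg (join (neg x) (neg y))), pzero = z, pone = neg z \<rparr>)"

definition palg_hom :: "'a palg \<Rightarrow> 'b palg \<Rightarrow> ('a \<Rightarrow> 'b) \<Rightarrow> bool" where
  "palg_hom S T h \<longleftrightarrow>
     h ` pcarrier S \<subseteq> pcarrier T \<and>
     (\<forall>x\<in>pcarrier S. \<forall>y\<in>pcarrier S.
        h (pplus S x y) = pplus T (h x) (h y) \<and>
        h (ptimes S x y) = ptimes T (h x) (h y) \<and>
        h (pjoin S x y) = pjoin T (h x) (h y) \<and>
        h (pmeet S x y) = pmeet T (h x) (h y)) \<and>
     h (pzero S) = pzero T \<and> h (pone S) = pone T"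

definition palg_embedding :: "'a palg \<Rightarrow> 'b palg \<Rightarrow> ('a \<Rightarrow> 'b) \<Rightarrow> bool" where
  "palg_embedding S T h \<longleftrightarrow> palg_hom S T h \<and> inj_on h (pcarrier S)"

text \<open>S is a positive MV-algebra, witnessed by an MV-algebra living on type 'b.
  (S is positive iff this holds for some type 'b; in particular, S is not positive
  iff it fails for every type 'b.)\<close>
definition positive_MV_in :: "'b itself \<Rightarrow> 'a palg \<Rightarrow> bool" where
  "positive_MV_in (_ :: 'b itself) S \<longleftrightarrow>
     (\<exists>(A :: 'b set) oplus neg z h. mv_algebra A oplus neg z \<and>
        palg_embedding S (mv_reduct A oplus neg z) h)"

definition palg_closed :: "'a palg \<Rightarrow> 'a set \<Rightarrow> bool" where
  "palg_closed S B \<longleftrightarrow> B \<subseteq> pcarrier S \<and> pzero S \<in> B \<and> pone S \<in> B \<and>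
     (\<forall>x\<in>B. \<forall>y\<in>B. pplus S x y \<in> B \<and> ptimes S x y \<in> B \<and> pjoin S x y \<in> B \<and> pmeet S x y \<in> B)"

definition palg_sub :: "'a palg \<Rightarrow> 'a set \<Rightarrow> 'a palg" where
  "palg_sub S B = S\<lparr>pcarrier := B\<rparr>"

definition palg_congruence :: "'a palg \<Rightarrow> ('a \<times> 'a) set \<Rightarrow> bool" where
  "palg_congruence S \<theta> \<longleftrightarrow> equiv (pcarrier S) \<theta> \<and>
     (\<forall>x x' y y'. (x, x') \<in> \<theta> \<longrightarrow> (y, y') \<in> \<theta> \<longrightarrow>
        (pplus S x y, pplus S x' y') \<in> \<theta> \<and> (ptimes S x y, ptimes S x' y') \<in> \<theta> \<and>
        (pjoin S x y, pjoin S x' y') \<in> \<theta> \<and> (pmeet S x y, pmeet S x' y') \<in> \<theta>)"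

definition quot_op :: "('a \<times> 'a) set \<Rightarrow> ('a \<Rightarrow> 'a \<Rightarrow> 'a) \<Rightarrow> 'a set \<Rightarrow> 'a set \<Rightarrow> 'a set" where
  "quot_op \<theta> f X Y = (\<Union>x\<in>X. \<Union>y\<in>Y. \<theta> `` {f x y})"

definition palg_quotient :: "'a palg \<Rightarrow> ('a \<times> 'a) set \<Rightarrow> 'a set palg" where
  "palg_quotient S \<theta> =
     \<lparr> pcarrier = pcarrier S // \<theta>,
       pplus = quot_op \<theta> (pplus S), ptimes = quot_op \<theta> (ptimes S),
       pjoin = quot_op \<theta> (pjoin S), pmeet = quot_op \<theta> (pmeet S),
       pzero = \<theta> `` {pzero S}, pone = \<theta> `` {pone S} \<rparr>"

section \<open>The Chang algebra C = Gamma(Z \<times>lex Z, (1,0)), epsilon = (0,1)\<close>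

definition lex_le :: "int \<times> int \<Rightarrow> int \<times> int \<Rightarrow> bool" where
  "lex_le p q \<longleftrightarrow> fst p < fst q \<or> (fst p = fst q \<and> snd p \<le> snd q)"

definition chang_carrier :: "(int \<times> int) set" where
  "chang_carrier = {p. lex_le (0, 0) p \<and> lex_le p (1, 0)}"

definition chang_oplus :: "int \<times> int \<Rightarrow> int \<times> int \<Rightarrow> int \<times> int" where
  "chang_oplus p q = (let s = (fst p + fst q, snd p + snd q) in
                      if lex_le s (1, 0) then s else (1, 0))"

definition chang_neg :: "int \<times> int \<Rightarrow> int \<times> int" where
  "chang_neg p = (1 - fst p, - snd p)"

definition Chang :: "(int \<times> int) palg" where
  "Chang = mv_reduct chang_carrier chang_oplus chang_neg (0, 0)"

definition chang_sub :: "(int \<times> int) set" where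
  "chang_sub = {(0, int n) | n. True} \<union> {(1, 0)}"

definition chang_theta :: "((int \<times> int) \<times> (int \<times> int)) set" where
  "chang_theta =
     {((0,0),(0,0))} \<union>
     {(p, q). p \<in> {(0, int n) | n. n \<ge> 1} \<and> q \<in> {(0, int n) | n. n \<ge> 1}} \<union>
     {((1,0),(1,0))}"

end

theory Submission imports Defs begin
lemma cc: "p \<in> chang_carrier \<longleftrightarrow> (fst p = 0 \<and> snd p \<ge> 0) \<or> (fst p = 1 \<and> snd p \<le> 0)"
  by (cases p) (auto simp: chang_carrier_def lex_le_def)
lemma op: "chang_oplus (a,b) (c,d) = (if a+c<1 \<or> (a+c=1 \<and> b+d \<le>0) then (a+c,b+d) else (1,0))"
  by (simp add: chang_oplus_def lex_le_def)
lemma ng: "chang_neg (a,b) = (1-a,-b)" by (simp add: chang_neg_def)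
lemma ccE: assumes "x \<in> chang_carrier"
  obtains n where "n \<ge> 0" "x = (0,n)" | n where "n \<ge> 0" "x = (1,-n)"
  using assms by (cases x) (auto simp: cc, metis minus_minus)

lemma a1: "x \<in> chang_carrier \<Longrightarrow> chang_neg x \<in> chang_carrier"
    by (elim ccE) (simp_all add: cc ng)
lemma a2: "x \<in> chang_carrier \<Longrightarrow> y \<in> chang_carrier \<Longrightarrow> chang_oplus x y \<in> chang_carrier"
    by (elim ccE) (simp_all add: cc op)
lemma a3: "x \<in> chang_carrier \<Longrightarrow> y \<in> chang_carrier \<Longrightarrow> w \<in> chang_carrier \<Longrightarrow> chang_oplus (chang_oplus x y) w = chang_oplus x (chang_oplus y w)"
    by (elim ccE) (simp_all add: op)
lemma a4: "x \<in> chang_carrier \<Longrightarrow> y \<in> chang_carrier \<Longrightarrow> chang_oplus (chang_neg (chang_oplus (chang_neg x) y)) y = chang_oplus (chang_neg (chang_oplus (chang_neg y) x)) x"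
    by (elim ccE) (simp_all add: op ng)
lemma a5: "x \<in> chang_carrier \<Longrightarrow> y \<in> chang_carrier \<Longrightarrow> chang_oplus x y = chang_oplus y x"
    by (elim ccE) (simp_all add: op add.commute)
lemma a6: "x \<in> chang_carrier \<Longrightarrow> chang_oplus x (0,0) = x"
    by (elim ccE) (simp_all add: op)
lemma a7: "x \<in> chang_carrier \<Longrightarrow> chang_neg (chang_neg x) = x"
    by (elim ccE) (simp_all add: ng)
lemma a8: "x \<in> chang_carrier \<Longrightarrow> chang_oplus x (chang_neg (0,0)) = chang_neg (0,0)"
    by (elim ccE) (simp_all add: op ng)
lemma a0: "(0,0) \<in> chang_carrier" by (simp add: cc)

lemma mv: "mv_algebra chang_carrier chang_oplus chang_neg (0, 0)"
  unfolding mv_algebra_def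
  by (intro conjI ballI a0 a1 a2 a3 a4 a5 a6 a7 a8; assumption)

abbreviation "S \<equiv> palg_sub Chang chang_sub"

lemma S_simps: "pcarrier S = chang_sub" "pplus S = chang_oplus"
  "ptimes S x y = chang_neg (chang_oplus (chang_neg x) (chang_neg y))"
  "pjoin S x y = chang_oplus (chang_neg (chang_oplus (chang_neg x) (chang_neg (chang_neg y)))) y"
  "pmeet S x y = chang_neg (chang_oplus (chang_neg (chang_oplus (chang_neg (chang_neg x)) (chang_neg (chang_neg (chang_neg y))))) (chang_neg y))"
  "pzero S = (0,0)" "pone S = (1,0)"
  by (simp_all add: palg_sub_def Chang_def mv_reduct_def Let_def ng)

lemma is1: "(x \<in> {(0::int, int n) | n. True}) \<longleftrightarrow> fst x = 0 \<and> snd x \<ge> 0"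
proof
  assume "fst x = 0 \<and> snd x \<ge> 0"
  then have "x = (0, int (nat (snd x)))" by (cases x) auto
  then show "x \<in> {(0::int, int n) | n. True}" by blast
qed auto
lemma is2: "(x \<in> {(0::int, int n) | n. n \<ge> 1}) \<longleftrightarrow> fst x = 0 \<and> snd x \<ge> 1"
proof
  assume a: "fst x = 0 \<and> snd x \<ge> 1"
  then have "x = (0, int (nat (snd x)))" by (cases x) auto
  moreover have "nat (snd x) \<ge> 1" using a by auto
  ultimately show "x \<in> {(0::int, int n) | n. n \<ge> 1}" by blast
qed auto
lemma ss: "p \<in> chang_sub \<longleftrightarrow> (fst p = 0 \<and> snd p \<ge> 0) \<or> p = (1,0)"
  unfolding chang_sub_def using is1[of p] by blast
lemma ssE: assumes "x \<in> chang_sub"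
  obtains n where "n \<ge> 0" "x = (0,n)" | "x = (1,0)"
  using assms by (cases x) (auto simp: ss)

lemma th: "(p,q) \<in> chang_theta \<longleftrightarrow> (p=(0,0)\<and>q=(0,0)) \<or> (fst p=0 \<and> snd p>0 \<and> fst q=0 \<and> snd q >0) \<or> (p=(1,0)\<and>q=(1,0))"
  unfolding chang_theta_def using is2[of p] is2[of q] by auto

lemma thE: assumes "(x,x') \<in> chang_theta"
  obtains "x = (0,0)" "x' = (0,0)" | n m where "n > 0" "m > 0" "x = (0,n)" "x' = (0,m)" | "x = (1,0)" "x' = (1,0)"
  using assms by (cases x; cases x') (auto simp: th)

lemma C_simps: "pcarrier Chang = chang_carrier" "pplus Chang = chang_oplus"
  "ptimes Chang x y = chang_neg (chang_oplus (chang_neg x) (chang_neg y))"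
  "pjoin Chang x y = chang_oplus (chang_neg (chang_oplus (chang_neg x) (chang_neg (chang_neg y)))) y"
  "pmeet Chang x y = chang_neg (chang_oplus (chang_neg (chang_oplus (chang_neg (chang_neg x)) (chang_neg (chang_neg (chang_neg y))))) (chang_neg y))"
  "pzero Chang = (0,0)" "pone Chang = (1,0)"
  by (simp_all add: Chang_def mv_reduct_def Let_def ng)

lemma closed: "palg_closed Chang chang_sub"
  unfolding palg_closed_def C_simps
proof (intro conjI ballI)
  show "chang_sub \<subseteq> chang_carrier" by (auto simp: ss cc)
  show "(0,0) \<in> chang_sub" "(1,0) \<in> chang_sub" by (auto simp: ss)
  fix x y assume a: "x \<in> chang_sub" "y \<in> chang_sub"
  show "chang_oplus x y \<in> chang_sub" using a by (elim ssE) (simp_all add: op ss)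
  show "chang_neg (chang_oplus (chang_neg x) (chang_neg y)) \<in> chang_sub" using a by (elim ssE) (simp_all add: op ng ss)
  show "chang_oplus (chang_neg (chang_oplus (chang_neg x) (chang_neg (chang_neg y)))) y \<in> chang_sub" using a by (elim ssE) (simp_all add: op ng ss)
  show "chang_neg (chang_oplus (chang_neg (chang_oplus (chang_neg (chang_neg x)) (chang_neg (chang_neg (chang_neg y))))) (chang_neg y)) \<in> chang_sub" using a by (elim ssE) (simp_all add: op ng ss)
qed

lemma pos: "positive_MV_in TYPE(int \<times> int) S"
  unfolding positive_MV_in_def palg_embedding_def
  apply (rule exI[of _ chang_carrier], rule exI[of _ chang_oplus], rule exI[of _ chang_neg], rule exI[of _ "(0,0)"], rule exI[of _ id])
  using mv closed unfolding palg_closed_def C_simps by (auto simp: palg_hom_def S_simps mv_reduct_def Let_def ng)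

lemma opv:
  "0 \<le> n \<Longrightarrow> 0 \<le> m \<Longrightarrow> pplus S (0,n) (0,m) = (0,n+m)"
  "0 \<le> n \<Longrightarrow> pplus S (1,0) (0,n) = (1,0)"
  "0 \<le> n \<Longrightarrow> pplus S (0,n) (1,0) = (1,0)"
  "pplus S (1,0) (1,0) = (1,0)"
  "0 \<le> n \<Longrightarrow> 0 \<le> m \<Longrightarrow> ptimes S (0,n) (0,m) = (0,0)"
  "0 \<le> n \<Longrightarrow> ptimes S (0,n) (1,0) = (0,n)"
  "0 \<le> n \<Longrightarrow> ptimes S (1,0) (0,n) = (0,n)"
  "ptimes S (1,0) (1,0) = (1,0)"
  "0 \<le> n \<Longrightarrow> 0 \<le> m \<Longrightarrow> pjoin S (0,n) (0,m) = (0,max n m)"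
  "0 \<le> n \<Longrightarrow> pjoin S (0,n) (1,0) = (1,0)"
  "0 \<le> n \<Longrightarrow> pjoin S (1,0) (0,n) = (1,0)"
  "pjoin S (1,0) (1,0) = (1,0)"
  "0 \<le> n \<Longrightarrow> 0 \<le> m \<Longrightarrow> pmeet S (0,n) (0,m) = (0,min n m)"
  "0 \<le> n \<Longrightarrow> pmeet S (0,n) (1,0) = (0,n)"
  "0 \<le> n \<Longrightarrow> pmeet S (1,0) (0,n) = (0,n)"
  "pmeet S (1,0) (1,0) = (1,0)"
  by (simp_all add: S_simps op ng max_def min_def)

lemma cong: "palg_congruence S chang_theta"
  unfolding palg_congruence_def
proof (intro conjI allI impI)
  show "equiv (pcarrier S) chang_theta"
    unfolding S_simps equiv_def refl_on_def sym_def trans_def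
    by (auto simp: th ss)
next
  fix x x' y y' assume a: "(x,x') \<in> chang_theta" "(y,y') \<in> chang_theta"
  show "(pplus S x y, pplus S x' y') \<in> chang_theta"
    using a by (elim thE) (simp_all add: opv th max_def min_def)
  show "(pjoin S x y, pjoin S x' y') \<in> chang_theta"
    using a by (elim thE) (simp_all add: opv th max_def min_def)
  show "(ptimes S x y, ptimes S x' y') \<in> chang_theta"
    using a by (elim thE) (simp_all add: opv th max_def min_def)
  show "(pmeet S x y, pmeet S x' y') \<in> chang_theta"
    using a by (elim thE) (simp_all add: opv th max_def min_def)
qed

lemma quot_cls:
  assumes eq: "equiv A \<theta>" and x: "x \<in> A" and y: "y \<in> A"
    and comp: "\<forall>x x' y y'. (x,x') \<in> \<theta> \<longrightarrow> (y,y') \<in> \<theta> \<longrightarrow> (f x y, f x' y') \<in> \<theta>"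
  shows "quot_op \<theta> f (\<theta>``{x}) (\<theta>``{y}) = \<theta>``{f x y}"
proof
  have tr: "trans \<theta>" and rf: "refl_on A \<theta>" using eq by (auto simp: equiv_def)
  show "quot_op \<theta> f (\<theta>``{x}) (\<theta>``{y}) \<subseteq> \<theta>``{f x y}"
  proof
    fix w assume "w \<in> quot_op \<theta> f (\<theta>``{x}) (\<theta>``{y})"
    then obtain x' y' where "(x,x') \<in> \<theta>" "(y,y') \<in> \<theta>" "(f x' y', w) \<in> \<theta>"
      unfolding quot_op_def by blast
    then have "(f x y, f x' y') \<in> \<theta>" "(f x' y', w) \<in> \<theta>" using comp by blast+
    then show "w \<in> \<theta>``{f x y}" using tr unfolding trans_def by blast
  qed
  have "(x,x) \<in> \<theta>" "(y,y) \<in> \<theta>" using rf x y unfolding refl_on_def by auto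
  then show "\<theta>``{f x y} \<subseteq> quot_op \<theta> f (\<theta>``{x}) (\<theta>``{y})"
    unfolding quot_op_def by blast
qed

lemma hom_quot:
  assumes c: "palg_congruence T \<theta>"
  shows "palg_hom T (palg_quotient T \<theta>) (\<lambda>x. \<theta>``{x})"
proof -
  have eq: "equiv (pcarrier T) \<theta>" using c by (simp add: palg_congruence_def)
  have cp: "\<forall>x x' y y'. (x,x') \<in> \<theta> \<longrightarrow> (y,y') \<in> \<theta> \<longrightarrow> (pplus T x y, pplus T x' y') \<in> \<theta>"
           "\<forall>x x' y y'. (x,x') \<in> \<theta> \<longrightarrow> (y,y') \<in> \<theta> \<longrightarrow> (ptimes T x y, ptimes T x' y') \<in> \<theta>"
           "\<forall>x x' y y'. (x,x') \<in> \<theta> \<longrightarrow> (y,y') \<in> \<theta> \<longrightarrow> (pjoin T x y, pjoin T x' y') \<in> \<theta>"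
           "\<forall>x x' y y'. (x,x') \<in> \<theta> \<longrightarrow> (y,y') \<in> \<theta> \<longrightarrow> (pmeet T x y, pmeet T x' y') \<in> \<theta>"
    using c by (simp_all add: palg_congruence_def)
  show ?thesis unfolding palg_hom_def
    using quot_cls[OF eq _ _ cp(1)] quot_cls[OF eq _ _ cp(2)] quot_cls[OF eq _ _ cp(3)] quot_cls[OF eq _ _ cp(4)]
    by (auto simp: palg_quotient_def intro: quotientI)
qed

lemma mv_idem:
  assumes mv: "mv_algebra A oplus neg z" and a: "a \<in> A" and h1: "oplus a a = a"
    and h2: "neg (oplus (neg a) (neg a)) = z"
  shows "a = z"
proof -
  have zA: "z \<in> A" and nA: "\<And>x. x \<in> A \<Longrightarrow> neg x \<in> A"
    and pA: "\<And>x y. x \<in> A \<Longrightarrow> y \<in> A \<Longrightarrow> oplus x y \<in> A"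
    and cm: "\<And>x y. x \<in> A \<Longrightarrow> y \<in> A \<Longrightarrow> oplus x y = oplus y x"
    and un: "\<And>x. x \<in> A \<Longrightarrow> oplus x z = x"
    and nn: "\<And>x. x \<in> A \<Longrightarrow> neg (neg x) = x"
    and ab: "\<And>x. x \<in> A \<Longrightarrow> oplus x (neg z) = neg z"
    and ax: "\<And>x y. x \<in> A \<Longrightarrow> y \<in> A \<Longrightarrow> oplus (neg (oplus (neg x) y)) y = oplus (neg (oplus (neg y) x)) x"
    using mv unfolding mv_algebra_def by blast+
  have na: "neg a \<in> A" using nA a .
  have e1: "oplus (neg a) (neg a) = neg z"
    using h2 nn[OF pA[OF na na]] by metis
  have "oplus (neg (oplus (neg (neg a)) a)) a = oplus (neg (oplus (neg a) (neg a))) (neg a)"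
    using ax[OF na a] .
  then have "oplus (neg a) a = oplus z (neg a)" using nn[OF a] h1 h2 by simp
  also have "\<dots> = neg a" using cm[OF zA na] un[OF na] by simp
  finally have e3: "oplus (neg a) a = neg a" .
  have "oplus (neg (oplus (neg a) (neg z))) (neg z) = oplus (neg (oplus (neg (neg z)) a)) a"
    using ax[OF a nA[OF zA]] .
  moreover have "oplus (neg a) (neg z) = neg z" using ab[OF na] .
  moreover have "neg (neg z) = z" using nn[OF zA] .
  moreover have "oplus z a = a" using cm[OF zA a] un[OF a] by simp
  moreover have "oplus z (neg z) = neg z" using ab[OF zA] .
  ultimately have "oplus (neg a) a = neg z" by simp
  with e3 have "neg a = neg z" by simp
  then show "a = z" using nn[OF a] nn[OF zA] by metis
qed

lemma notpos: "\<not> positive_MV_in TYPE('b) (palg_quotient S chang_theta)"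
proof
  let ?Q = "palg_quotient S chang_theta"
  assume "positive_MV_in TYPE('b) ?Q"
  then obtain A :: "'b set" and oplus neg z h where mv: "mv_algebra A oplus neg z"
    and hom: "palg_hom ?Q (mv_reduct A oplus neg z) h" and inj: "inj_on h (pcarrier ?Q)"
    unfolding positive_MV_in_def palg_embedding_def by blast
  define E where "E = chang_theta``{(0,1)}"
  define Z where "Z = chang_theta``{(0,0)}"
  have eq: "equiv chang_sub chang_theta" using cong by (simp add: palg_congruence_def S_simps)
  have cp: "\<forall>x x' y y'. (x,x') \<in> chang_theta \<longrightarrow> (y,y') \<in> chang_theta \<longrightarrow> (pplus S x y, pplus S x' y') \<in> chang_theta"
           "\<forall>x x' y y'. (x,x') \<in> chang_theta \<longrightarrow> (y,y') \<in> chang_theta \<longrightarrow> (ptimes S x y, ptimes S x' y') \<in> chang_theta"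
    using cong by (simp_all add: palg_congruence_def)
  have s1: "(0,1) \<in> chang_sub" and s0: "(0,0) \<in> chang_sub" by (simp_all add: ss)
  have EQ: "E \<in> pcarrier ?Q" "Z \<in> pcarrier ?Q"
    unfolding E_def Z_def palg_quotient_def using s1 s0 by (auto simp: S_simps intro: quotientI)
  have "pplus ?Q E E = chang_theta``{pplus S (0,1) (0,1)}"
    unfolding E_def palg_quotient_def using quot_cls[OF eq s1 s1 cp(1)] by simp
  also have "\<dots> = chang_theta``{(0,2)}" by (simp add: opv)
  also have "\<dots> = E" unfolding E_def
    by (rule equiv_class_eq[OF eq]) (simp add: th)
  finally have pE: "pplus ?Q E E = E" .
  have "ptimes ?Q E E = chang_theta``{ptimes S (0,1) (0,1)}"
    unfolding E_def palg_quotient_def using quot_cls[OF eq s1 s1 cp(2)] by simp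
  also have "\<dots> = Z" unfolding Z_def by (simp add: opv)
  finally have tE: "ptimes ?Q E E = Z" .
  have zQ: "pzero ?Q = Z" by (simp add: palg_quotient_def Z_def S_simps)
  have hA: "h E \<in> A" using hom EQ(1) by (auto simp: palg_hom_def mv_reduct_def Let_def)
  have hp: "h (pplus ?Q E E) = pplus (mv_reduct A oplus neg z) (h E) (h E)"
    and ht: "h (ptimes ?Q E E) = ptimes (mv_reduct A oplus neg z) (h E) (h E)"
    and hz: "h (pzero ?Q) = pzero (mv_reduct A oplus neg z)"
    using hom EQ(1) unfolding palg_hom_def by blast+
  have "h E = oplus (h E) (h E)" using hp pE by (simp add: mv_reduct_def Let_def)
  moreover have "h Z = neg (oplus (neg (h E)) (neg (h E)))" using ht tE by (simp add: mv_reduct_def Let_def)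
  moreover have "h Z = z" using hz zQ by (simp add: mv_reduct_def Let_def)
  ultimately have "h E = h Z" using mv_idem[OF mv hA] by metis
  then have "E = Z" using inj EQ by (simp add: inj_on_def)
  moreover have "(0,1) \<in> E" unfolding E_def by (simp add: th)
  moreover have "(0,1) \<notin> Z" unfolding Z_def by (simp add: th)
  ultimately show False by simp
qed

theorem mainTheorem8:
  shows "mv_algebra chang_carrier chang_oplus chang_neg (0, 0)
    \<and> palg_closed Chang chang_sub
    \<and> positive_MV_in TYPE(int \<times> int) (palg_sub Chang chang_sub)
    \<and> palg_congruence (palg_sub Chang chang_sub) chang_theta
    \<and> palg_hom (palg_sub Chang chang_sub) (palg_quotient (palg_sub Chang chang_sub) chang_theta)
        (\<lambda>x. chang_theta `` {x})
    \<and> \<not> positive_MV_in TYPE('b) (palg_quotient (palg_sub Chang chang_sub) chang_theta)"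
  using mv closed pos cong hom_quot[OF cong] notpos by blast

end
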